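(* Let $k,n$ be positive integers with $k\leqslant n$, and let $X\subseteq [n]^k_<$ be either an order ideal of $[n]^k_<$ (with respect to the Bruhat order) or a matroid. Then every linear extension of $X$ is a shelling order.
   Context: $[n]:=\{1,\ldots,n\}$. $[n]^k_<$ denotes the set of $k$-element subsets of $[n]$, each identified with the increasing tuple $x=(x_1<\cdots<x_k)$ of its elements; $A+B:=(A\setminus B)\cup(B\setminus A)$. The Bruhat order on $[n]^k_<$ is: $x\leqslant y$ iff $x_i\leqslant y_i$ for all $i\in[k]$. An order ideal is a subset $X$ such that $y\in X$ and $x\leqslant y$ imply $x\in X$. $X\subseteq[n]^k_<$ is a matroid if for all $A,B\in X$ and $a\in A\setminus B$ there exists $b\in B\setminus A$ with $A+\{a,b\}\in X$. A linear extension of $X$ is a tuple $L=(L_1,\ldots,L_h)$ listing every element of $X$ exactly once such that $L_i<L_j$ in the Bruhat order implies $i<j$. A tuple $C=(C_1,\ldots,C_h)$ of pairwise distinct elements of $[n]^k_<$ is a shelling order if for all $i<j$ in $[h]$ there exists $z<j$ with $|C_z\cap C_j|=k-1$ and $C_i\cap C_j\subseteq C_z\cap C_j$. *)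

theory Defs
  imports Main
begin

definition ksubsets :: "nat \<Rightarrow> nat \<Rightarrow> nat set set" where
  "ksubsets n k = {A. A \<subseteq> {1..n} \<and> card A = k}"

definition bruhat_le :: "nat set \<Rightarrow> nat set \<Rightarrow> bool" where
  "bruhat_le x y \<longleftrightarrow> card x = card y \<and>
     (\<forall>i < card x. sorted_list_of_set x ! i \<le> sorted_list_of_set y ! i)"

definition bruhat_less :: "nat set \<Rightarrow> nat set \<Rightarrow> bool" where
  "bruhat_less x y \<longleftrightarrow> bruhat_le x y \<and> x \<noteq> y"

definition order_ideal :: "nat \<Rightarrow> nat \<Rightarrow> nat set set \<Rightarrow> bool" where
  "order_ideal n k X \<longleftrightarrow> X \<subseteq> ksubsets n k \<and>
     (\<forall>y\<in>X. \<forall>x\<in>ksubsets n k. bruhat_le x y \<longrightarrow> x \<in> X)"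

definition symdiff :: "'a set \<Rightarrow> 'a set \<Rightarrow> 'a set" where
  "symdiff A B = (A - B) \<union> (B - A)"

definition is_matroid :: "nat \<Rightarrow> nat \<Rightarrow> nat set set \<Rightarrow> bool" where
  "is_matroid n k X \<longleftrightarrow> X \<subseteq> ksubsets n k \<and>
     (\<forall>A\<in>X. \<forall>B\<in>X. \<forall>a\<in>A - B. \<exists>b\<in>B - A. symdiff A {a, b} \<in> X)"

text \<open>Linear extension, as a list L (positions 0..h-1 instead of 1..h).\<close>
definition linear_extension :: "nat set set \<Rightarrow> nat set list \<Rightarrow> bool" where
  "linear_extension X L \<longleftrightarrow> distinct L \<and> set L = X \<and>
     (\<forall>i < length L. \<forall>j < length L. bruhat_less (L ! i) (L ! j) \<longrightarrow> i < j)"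

definition shelling_order :: "nat \<Rightarrow> nat \<Rightarrow> nat set list \<Rightarrow> bool" where
  "shelling_order n k C \<longleftrightarrow> distinct C \<and> set C \<subseteq> ksubsets n k \<and>
     (\<forall>i j. i < j \<and> j < length C \<longrightarrow>
        (\<exists>z < j. card (C ! z \<inter> C ! j) = k - 1 \<and> C ! i \<inter> C ! j \<subseteq> C ! z \<inter> C ! j))"

end

theory Submission
  imports Defs
begin

lemma card_swap:
  assumes "finite A" "a \<in> A" "b \<notin> A"
  shows "card (A - {a} \<union> {b}) = card A"
proof -
  have "card (A - {a} \<union> {b}) = Suc (card (A - {a}))" using assms by simp
  also have "\<dots> = card A" using assms by (metis card_Suc_Diff1)
  finally show ?thesis .
qed

lemma sl_le_imp:
  fixes x :: "nat set"
  assumes "finite x" "i < card x" "sorted_list_of_set x ! i \<le> v"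
  shows "i < card {y\<in>x. y \<le> v}"
proof -
  let ?xs = "sorted_list_of_set x"
  have "(!) ?xs ` {..i} \<subseteq> {y\<in>x. y \<le> v}"
  proof
    fix y assume "y \<in> (!) ?xs ` {..i}"
    then obtain m where m: "m \<le> i" "y = ?xs ! m" by auto
    have "?xs ! m \<le> ?xs ! i"
      using sorted_nth_mono[OF sorted_sorted_list_of_set m(1)] assms by simp
    moreover have "?xs ! m \<in> x" using assms m
      by (metis le_less_trans length_sorted_list_of_set nth_mem set_sorted_list_of_set)
    ultimately show "y \<in> {y\<in>x. y \<le> v}" using m assms by auto
  qed
  moreover have "inj_on ((!) ?xs) {..i}"
    using assms distinct_sorted_list_of_set[of x]
    by (auto simp: inj_on_def nth_eq_iff_index_eq)
  hence "card ((!) ?xs ` {..i}) = Suc i" by (simp add: card_image)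
  moreover have "finite {y\<in>x. y \<le> v}" using assms by simp
  ultimately show ?thesis by (metis card_mono Suc_le_eq)
qed

lemma imp_sl_le:
  fixes x :: "nat set"
  assumes "finite x" "i < card x" "i < card {y\<in>x. y \<le> v}"
  shows "sorted_list_of_set x ! i \<le> v"
proof (rule ccontr)
  let ?xs = "sorted_list_of_set x"
  assume "\<not> ?xs ! i \<le> v"
  have "{y\<in>x. y \<le> v} \<subseteq> (!) ?xs ` {..<i}"
  proof
    fix y assume y: "y \<in> {y\<in>x. y \<le> v}"
    then have "y \<in> set ?xs" using assms by simp
    then obtain m where m: "m < length ?xs" "y = ?xs ! m" by (metis in_set_conv_nth)
    have "m < i"
    proof (rule ccontr)
      assume "\<not> m < i"
      then have "?xs ! i \<le> ?xs ! m" using sorted_nth_mono[OF sorted_sorted_list_of_set, of i m x] m by simp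
      thus False using y m \<open>\<not> ?xs ! i \<le> v\<close> by auto
    qed
    thus "y \<in> (!) ?xs ` {..<i}" using m by auto
  qed
  hence "card {y\<in>x. y \<le> v} \<le> card ((!) ?xs ` {..<i})" by (simp add: card_mono)
  also have "\<dots> \<le> i" using card_image_le[of "{..<i}" "(!) ?xs"] by simp
  finally show False using assms by simp
qed

lemma bruhat_le_count:
  fixes x y :: "nat set"
  assumes "finite x" "finite y" "card x = card y"
    and "\<And>v. card {s\<in>y. s \<le> v} \<le> card {s\<in>x. s \<le> v}"
  shows "bruhat_le x y"
  unfolding bruhat_le_def
proof (intro conjI allI impI)
  show "card x = card y" by fact
  fix i assume i: "i < card x"
  let ?v = "sorted_list_of_set y ! i"
  have "i < card {s\<in>y. s \<le> ?v}" using sl_le_imp[OF assms(2), of i ?v] i assms(3) by simp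
  also have "\<dots> \<le> card {s\<in>x. s \<le> ?v}" by fact
  finally show "sorted_list_of_set x ! i \<le> ?v" using imp_sl_le[OF assms(1) i] by simp
qed

lemma swap_le:
  fixes S :: "nat set"
  assumes "finite S" "b \<in> S" "c \<notin> S" "c < b"
  shows "bruhat_le (S - {b} \<union> {c}) S"
proof (rule bruhat_le_count)
  show "finite (S - {b} \<union> {c})" using assms by simp
  show "finite S" by fact
  show "card (S - {b} \<union> {c}) = card S" using card_swap[OF assms(1,2,3)] .
  fix v
  let ?f = "\<lambda>s. if s = b then c else s"
  have "inj_on ?f {s\<in>S. s \<le> v}" unfolding inj_on_def using assms(2,3) by auto
  moreover have "?f ` {s\<in>S. s \<le> v} \<subseteq> {s\<in>S - {b} \<union> {c}. s \<le> v}"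
  proof
    fix y assume "y \<in> ?f ` {s\<in>S. s \<le> v}"
    then obtain s where s: "s \<in> S" "s \<le> v" "y = ?f s" by blast
    show "y \<in> {s\<in>S - {b} \<union> {c}. s \<le> v}"
    proof (cases "s = b")
      case True thus ?thesis using s assms(4) by simp
    next
      case False thus ?thesis using s by simp
    qed
  qed
  moreover have "finite {s\<in>S - {b} \<union> {c}. s \<le> v}" using assms(1) by simp
  ultimately show "card {s\<in>S. s \<le> v} \<le> card {s\<in>S - {b} \<union> {c}. s \<le> v}"
    using card_inj_on_le by blast
qed

lemma bruhat_le_trans:
  assumes "bruhat_le x y" "bruhat_le y z" shows "bruhat_le x z"
  using assms unfolding bruhat_le_def using order_trans by fastforce

definition good :: "nat set set \<Rightarrow> nat set \<Rightarrow> nat set \<Rightarrow> bool" where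
  "good X B A \<longleftrightarrow> (\<exists>b\<in>B - A. \<exists>c. c \<notin> B \<and> c < b \<and> B - {b} \<union> {c} \<in> X)"

lemma key:
  assumes sub: "X \<subseteq> ksubsets n k"
    and step: "\<And>A B. A \<in> X \<Longrightarrow> B \<in> X \<Longrightarrow> A \<noteq> B \<Longrightarrow>
        (\<exists>a\<in>A-B. \<exists>b\<in>B-A. b < a \<and> A - {a} \<union> {b} \<in> X) \<or> good X B A"
  shows "A \<in> X \<Longrightarrow> B \<in> X \<Longrightarrow> bruhat_le B A \<or> good X B A"
proof (induction "card (A - B)" arbitrary: A rule: less_induct)
  case less
  show ?case
  proof (cases "A = B")
    case True thus ?thesis by (simp add: bruhat_le_def)
  next
    case False
    from step[OF less.prems False] show ?thesis
    proof
      assume "\<exists>a\<in>A-B. \<exists>b\<in>B-A. b < a \<and> A - {a} \<union> {b} \<in> X"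
      then obtain a b where ab: "a \<in> A" "a \<notin> B" "b \<in> B" "b \<notin> A" "b < a"
        and A'X: "A - {a} \<union> {b} \<in> X" by auto
      let ?A' = "A - {a} \<union> {b}"
      have finA: "finite A" using sub less.prems by (auto simp: ksubsets_def intro: finite_subset)
      have "?A' - B = (A - B) - {a}" using ab by auto
      hence "card (?A' - B) < card (A - B)" using ab finA
        by (metis DiffI card_Diff1_less finite_Diff)
      from less.hyps[OF this A'X less.prems(2)]
      show ?thesis
      proof
        assume "bruhat_le B ?A'"
        moreover have "bruhat_le ?A' A" using swap_le[OF finA ab(1) ab(4) ab(5)] .
        ultimately show ?thesis using bruhat_le_trans by blast
      next
        assume "good X B ?A'"
        moreover have "B - ?A' \<subseteq> B - A" using ab by auto
        ultimately show ?thesis unfolding good_def by blast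
      qed
    qed simp
  qed
qed

lemma symdiff_eq: "a \<in> A \<Longrightarrow> b \<notin> A \<Longrightarrow> symdiff A {a, b} = A - {a} \<union> {b}"
  unfolding symdiff_def by auto

theorem corollary3p5:
  fixes n k :: nat and X :: "nat set set" and L :: "nat set list"
  assumes "0 < k" and "k \<le> n"
    and "order_ideal n k X \<or> is_matroid n k X"
    and "linear_extension X L"
  shows "shelling_order n k L"
proof -
  have sub: "X \<subseteq> ksubsets n k" using assms(3) unfolding order_ideal_def is_matroid_def by auto
  have fin: "\<And>A. A \<in> X \<Longrightarrow> finite A \<and> A \<subseteq> {1..n} \<and> card A = k"
    using sub unfolding ksubsets_def by (auto intro: finite_subset)
  have step: "(\<exists>a\<in>A-B. \<exists>b\<in>B-A. b < a \<and> A - {a} \<union> {b} \<in> X) \<or> good X B A"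
    if AB: "A \<in> X" "B \<in> X" "A \<noteq> B" for A B
  proof -
    have "A - B \<noteq> {}"
    proof
      assume "A - B = {}"
      hence "A \<subseteq> B" by auto
      thus False using fin[OF AB(1)] fin[OF AB(2)] AB(3) by (metis card_subset_eq)
    qed
    define a where "a = Max (A - B)"
    have a: "a \<in> A - B" "\<And>x. x \<in> A - B \<Longrightarrow> x \<le> a"
      using Max_in[of "A - B"] Max_ge[of "A - B"] \<open>A - B \<noteq> {}\<close> fin[OF AB(1)] unfolding a_def by auto
    from assms(3) show ?thesis
    proof
      assume oi: "order_ideal n k X"
      have "B - A \<noteq> {}"
      proof
        assume "B - A = {}"
        hence "B \<subseteq> A" by auto
        thus False using fin[OF AB(1)] fin[OF AB(2)] AB(3) by (metis card_subset_eq)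
      qed
      then obtain b where b: "b \<in> B - A" by auto
      show ?thesis
      proof (cases "b < a")
        case True
        have "bruhat_le (A - {a} \<union> {b}) A" using swap_le[of A a b] fin[OF AB(1)] a b True by auto
        moreover have "A - {a} \<union> {b} \<in> ksubsets n k"
          using fin[OF AB(1)] fin[OF AB(2)] a b card_swap[of A a b] unfolding ksubsets_def
          by (simp add: subset_iff)
        ultimately have "A - {a} \<union> {b} \<in> X" using oi AB(1) unfolding order_ideal_def by blast
        thus ?thesis using a b True by blast
      next
        case False
        hence ab: "a < b" using a b by (cases "a = b") auto
        have "bruhat_le (B - {b} \<union> {a}) B" using swap_le[of B b a] fin[OF AB(2)] a b ab by auto
        moreover have "B - {b} \<union> {a} \<in> ksubsets n k"
          using fin[OF AB(1)] fin[OF AB(2)] a b card_swap[of B b a] unfolding ksubsets_def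
          by (simp add: subset_iff)
        ultimately have "B - {b} \<union> {a} \<in> X" using oi AB(2) unfolding order_ideal_def by blast
        thus ?thesis unfolding good_def using a b ab by blast
      qed
    next
      assume m: "is_matroid n k X"
      then obtain b where b: "b \<in> B - A" "symdiff A {a, b} \<in> X"
        using AB a unfolding is_matroid_def by blast
      have bA: "A - {a} \<union> {b} \<in> X" using b symdiff_eq[of a A b] a by auto
      show ?thesis
      proof (cases "b < a")
        case True thus ?thesis using a b bA by blast
      next
        case False
        hence ab: "a < b" using a b by (cases "a = b") auto
        obtain a' where a': "a' \<in> A - B" "symdiff B {b, a'} \<in> X"
          using m AB b unfolding is_matroid_def by blast
        have "B - {b} \<union> {a'} \<in> X" using a' symdiff_eq[of b B a'] b by auto
        moreover have "a' < b" using a(2)[OF a'(1)] ab by simp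
        ultimately show ?thesis unfolding good_def using a' b by blast
      qed
    qed
  qed
  have LE: "distinct L" "set L = X"
    "\<And>i j. i < length L \<Longrightarrow> j < length L \<Longrightarrow> bruhat_less (L ! i) (L ! j) \<Longrightarrow> i < j"
    using assms(4) unfolding linear_extension_def by auto
  show ?thesis
    unfolding shelling_order_def
  proof (intro conjI allI impI)
    show "distinct L" by fact
    show "set L \<subseteq> ksubsets n k" using LE sub by simp
    fix i j assume ij: "i < j \<and> j < length L"
    let ?A = "L ! i" and ?B = "L ! j"
    have AX: "?A \<in> X" and BX: "?B \<in> X" using ij LE(2) by auto
    have ne: "?A \<noteq> ?B" using ij LE(1) by (simp add: nth_eq_iff_index_eq)
    from key[OF sub step AX BX]
    have "good X ?B ?A"
    proof
      assume "bruhat_le ?B ?A"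
      hence "bruhat_less ?B ?A" using ne unfolding bruhat_less_def by auto
      hence "j < i" using LE(3) ij by auto
      thus ?thesis using ij by simp
    qed
    then obtain b c where bc: "b \<in> ?B" "b \<notin> ?A" "c \<notin> ?B" "c < b" "?B - {b} \<union> {c} \<in> X"
      unfolding good_def by blast
    let ?C = "?B - {b} \<union> {c}"
    obtain z where z: "z < length L" "L ! z = ?C" using bc(5) LE(2) by (metis in_set_conv_nth)
    have "bruhat_le ?C ?B" using swap_le[of ?B b c] fin[OF BX] bc by auto
    moreover have "?C \<noteq> ?B" using bc by auto
    ultimately have "z < j" using LE(3)[OF z(1), of j] ij z unfolding bruhat_less_def by auto
    moreover have "?C \<inter> ?B = ?B - {b}" using bc by auto
    moreover have "card (?B - {b}) = k - 1" using fin[OF BX] bc by simp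
    moreover have "?A \<inter> ?B \<subseteq> ?B - {b}" using bc by auto
    ultimately show "\<exists>z<j. card (L ! z \<inter> L ! j) = k - 1 \<and> L ! i \<inter> L ! j \<subseteq> L ! z \<inter> L ! j"
      using z by metis
  qed
qed

end
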